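(* Let $f:[0,1]\times\mathbb{R}^4\to\mathbb{R}$ be continuous, and suppose there exists a constant $M>0$ such that $|f(x,u,y,v,z)|\le \frac{M}{2}$ for all $(x,u,y,v,z)\in\mathcal{D}_M$, where $$\mathcal{D}_M=\Big\{(x,u,y,v,z)\;:\;0\le x\le 1,\ |u|\le \tfrac{M}{384},\ |y|\le \tfrac{M}{72\sqrt3},\ |v|\le M,\ |z|\le M\Big\}.$$ Assume further that there exist constants $K_1,K_2,K_3,K_4\ge 0$ such that $$|f(x,u_2,y_2,v_2,z_2)-f(x,u_1,y_1,v_1,z_1)|\le K_1|u_2-u_1|+K_2|y_2-y_1|+K_3|v_2-v_1|+K_4|z_2-z_1|$$ for all $(x,u_i,y_i,v_i,z_i)\in\mathcal{D}_M$ $(i=1,2)$, and that $$q=\frac{K_1}{384}+\frac{K_2}{72\sqrt3}+K_3+K_4<\frac12 .$$ Then the boundary value problem $$u^{(4)}(x)=f(x,u(x),u'(x),u''(x),u'''(x)),\quad 0<x<1,\qquad u(0)=u(1)=0,\quad u'(0)=u'(1)=0,$$ has a unique solution $u$, and $$\|u\|_\infty\le \frac{M}{384},\quad \|u'\|_\infty\le \frac{M}{72\sqrt3},\quad \|u''\|_\infty\le M,\quad \|u'''\|_\infty\le M.$$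
   Context: A solution means a function $u\in C^4[0,1]$ satisfying the differential equation on $(0,1)$ and the boundary conditions. $\|g\|_\infty=\max_{x\in[0,1]}|g(x)|$. *)

theory Defs
  imports "HOL-Analysis.Analysis"
begin

definition in_DM :: "real \<Rightarrow> real \<Rightarrow> real \<Rightarrow> real \<Rightarrow> real \<Rightarrow> real \<Rightarrow> bool" where
  "in_DM M x u y v z \<longleftrightarrow> 0 \<le> x \<and> x \<le> 1 \<and> \<bar>u\<bar> \<le> M / 384 \<and>
     \<bar>y\<bar> \<le> M / (72 * sqrt 3) \<and> \<bar>v\<bar> \<le> M \<and> \<bar>z\<bar> \<le> M"

definition is_solution ::
  "(real \<Rightarrow> real \<Rightarrow> real \<Rightarrow> real \<Rightarrow> real \<Rightarrow> real) \<Rightarrow>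
   (real \<Rightarrow> real) \<Rightarrow> (real \<Rightarrow> real) \<Rightarrow> (real \<Rightarrow> real) \<Rightarrow> (real \<Rightarrow> real) \<Rightarrow> bool" where
  "is_solution f u u1 u2 u3 \<longleftrightarrow>
     (\<exists>u4. (\<forall>x\<in>{0..1}.
              (u has_real_derivative u1 x) (at x within {0..1}) \<and>
              (u1 has_real_derivative u2 x) (at x within {0..1}) \<and>
              (u2 has_real_derivative u3 x) (at x within {0..1}) \<and>
              (u3 has_real_derivative u4 x) (at x within {0..1})) \<and>
           continuous_on {0..1} u4 \<and>
           (\<forall>x\<in>{0<..<1}. u4 x = f x (u x) (u1 x) (u2 x) (u3 x))) \<and>
     u 0 = 0 \<and> u 1 = 0 \<and> u1 0 = 0 \<and> u1 1 = 0"

definition sol_bounds ::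
  "real \<Rightarrow> (real \<Rightarrow> real) \<Rightarrow> (real \<Rightarrow> real) \<Rightarrow> (real \<Rightarrow> real) \<Rightarrow> (real \<Rightarrow> real) \<Rightarrow> bool" where
  "sol_bounds M u u1 u2 u3 \<longleftrightarrow> (\<forall>x\<in>{0..1}.
     \<bar>u x\<bar> \<le> M / 384 \<and> \<bar>u1 x\<bar> \<le> M / (72 * sqrt 3) \<and> \<bar>u2 x\<bar> \<le> M \<and> \<bar>u3 x\<bar> \<le> M)"

end

theory Submission imports Defs begin

lemma chord_left:
  fixes a b x s :: real
  assumes "0 \<le> s" "s \<le> x"
  shows "x * \<bar>a + b * s\<bar> \<le> \<bar>a\<bar> * (x - s) + \<bar>a + b * x\<bar> * s"
proof -
  have "x * (a + b * s) = a * (x - s) + (a + b * x) * s" by (simp add: algebra_simps)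
  hence "\<bar>x * (a + b * s)\<bar> \<le> \<bar>a * (x - s)\<bar> + \<bar>(a + b * x) * s\<bar>" by (metis abs_triangle_ineq)
  thus ?thesis using assms by (simp add: abs_mult)
qed

lemma chord_right:
  fixes c d x s :: real
  assumes "x \<le> s" "s \<le> 1"
  shows "(1 - x) * \<bar>c + d * s\<bar> \<le> \<bar>c + d * x\<bar> * (1 - s) + \<bar>c + d\<bar> * (s - x)"
proof -
  have "(1 - x) * (c + d * s) = (c + d * x) * (1 - s) + (c + d) * (s - x)" by (simp add: algebra_simps)
  hence "\<bar>(1 - x) * (c + d * s)\<bar> \<le> \<bar>(c + d * x) * (1 - s)\<bar> + \<bar>(c + d) * (s - x)\<bar>" by (metis abs_triangle_ineq)
  thus ?thesis using assms by (simp add: abs_mult)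
qed

lemma left_bound:
  fixes \<phi> :: "real \<Rightarrow> real"
  assumes x: "0 \<le> x" and cont: "continuous_on {0..x} \<phi>" and bd: "\<And>s. s \<in> {0..x} \<Longrightarrow> \<bar>\<phi> s\<bar> \<le> D"
  shows "\<bar>integral {0..x} (\<lambda>s. s^2 * (a + b * s) * \<phi> s)\<bar> \<le> D * (x^3 * (\<bar>a\<bar> + 3 * \<bar>a + b * x\<bar>) / 12)"
proof (cases "x = 0")
  case True thus ?thesis using bd[of 0] by simp
next
  case False
  hence xp: "x > 0" using x by simp
  have D0: "0 \<le> D" using bd[of 0] x by force
  define k where "k = D / x"
  define g where "g s = k * (s^2 * (\<bar>a\<bar> * (x - s) + \<bar>a + b * x\<bar> * s))" for s
  define G where "G s = k * (\<bar>a\<bar> * (x * s^3 / 3 - s^4 / 4) + \<bar>a + b * x\<bar> * s^4 / 4)" for s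
  have "(g has_integral (G x - G 0)) {0..x}"
  proof (rule fundamental_theorem_of_calculus[OF x])
    fix s assume "s \<in> {0..x}"
    have "(G has_real_derivative g s) (at s within {0..x})"
      unfolding G_def g_def
      by (rule derivative_eq_intros refl | simp)+ (simp add: algebra_simps power2_eq_square power3_eq_cube)
    thus "(G has_vector_derivative g s) (at s within {0..x})"
      by (simp add: has_real_derivative_iff_has_vector_derivative)
  qed
  moreover have "G x - G 0 = D * (x^3 * (\<bar>a\<bar> + 3 * \<bar>a + b * x\<bar>) / 12)"
    using xp unfolding G_def k_def by (simp add: field_simps power4_eq_xxxx power3_eq_cube)
  ultimately have gi: "(g has_integral D * (x^3 * (\<bar>a\<bar> + 3 * \<bar>a + b * x\<bar>) / 12)) {0..x}" by simp
  have fi: "(\<lambda>s. s^2 * (a + b * s) * \<phi> s) integrable_on {0..x}"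
    by (intro integrable_continuous_interval continuous_intros cont)
  have "norm (integral {0..x} (\<lambda>s. s^2 * (a + b * s) * \<phi> s)) \<le> integral {0..x} g"
  proof (rule integral_norm_bound_integral[OF fi])
    show "g integrable_on {0..x}" using gi by blast
    fix s assume s: "s \<in> {0..x}"
    have "\<bar>s^2 * (a + b * s) * \<phi> s\<bar> = s^2 * \<bar>a + b * s\<bar> * \<bar>\<phi> s\<bar>" by (simp add: abs_mult)
    also have "\<dots> \<le> s^2 * \<bar>a + b * s\<bar> * D" using bd[OF s] by (simp add: mult_left_mono)
    also have "\<dots> = k * (s^2 * (x * \<bar>a + b * s\<bar>))" using xp by (simp add: k_def)
    also have "\<dots> \<le> g s" unfolding g_def using s chord_left[of s x a b] D0 xp
      by (intro mult_left_mono) (auto simp: k_def)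
    finally show "norm (s^2 * (a + b * s) * \<phi> s) \<le> g s" by simp
  qed
  moreover have "integral {0..x} g = D * (x^3 * (\<bar>a\<bar> + 3 * \<bar>a + b * x\<bar>) / 12)" using gi by (rule integral_unique)
  ultimately show ?thesis by simp
qed


lemma right_bound:
  fixes \<phi> :: "real \<Rightarrow> real"
  assumes x: "x \<le> 1" and cont: "continuous_on {x..1} \<phi>" and bd: "\<And>s. s \<in> {x..1} \<Longrightarrow> \<bar>\<phi> s\<bar> \<le> D"
  shows "\<bar>integral {x..1} (\<lambda>s. (1 - s)^2 * (c + d * s) * \<phi> s)\<bar> \<le> D * ((1 - x)^3 * (3 * \<bar>c + d * x\<bar> + \<bar>c + d\<bar>) / 12)"
proof (cases "x = 1")
  case True thus ?thesis using bd[of 1] by simp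
next
  case False
  hence xp: "1 - x > 0" using x by simp
  have D0: "0 \<le> D" using bd[of 1] x by force
  define k where "k = D / (1 - x)"
  define g where "g s = k * ((1 - s)^2 * (\<bar>c + d * x\<bar> * (1 - s) + \<bar>c + d\<bar> * (s - x)))" for s
  define G where "G s = k * (- \<bar>c + d * x\<bar> * (1 - s)^4 / 4 + \<bar>c + d\<bar> * (- (1 - x) * (1 - s)^3 / 3 + (1 - s)^4 / 4))" for s
  have "(g has_integral (G 1 - G x)) {x..1}"
  proof (rule fundamental_theorem_of_calculus[OF x])
    fix s assume "s \<in> {x..1}"
    have "(G has_real_derivative g s) (at s within {x..1})"
      unfolding G_def g_def
      by (rule derivative_eq_intros refl | simp)+ (simp add: algebra_simps power2_eq_square power3_eq_cube)
    thus "(G has_vector_derivative g s) (at s within {x..1})"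
      by (simp add: has_real_derivative_iff_has_vector_derivative)
  qed
  moreover have "G 1 - G x = D * ((1 - x)^3 * (3 * \<bar>c + d * x\<bar> + \<bar>c + d\<bar>) / 12)"
    using xp unfolding G_def k_def by (simp add: field_simps power4_eq_xxxx power3_eq_cube)
  ultimately have gi: "(g has_integral D * ((1 - x)^3 * (3 * \<bar>c + d * x\<bar> + \<bar>c + d\<bar>) / 12)) {x..1}" by simp
  have fi: "(\<lambda>s. (1 - s)^2 * (c + d * s) * \<phi> s) integrable_on {x..1}"
    by (intro integrable_continuous_interval continuous_intros cont)
  have "norm (integral {x..1} (\<lambda>s. (1 - s)^2 * (c + d * s) * \<phi> s)) \<le> integral {x..1} g"
  proof (rule integral_norm_bound_integral[OF fi])
    show "g integrable_on {x..1}" using gi by blast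
    fix s assume s: "s \<in> {x..1}"
    have "\<bar>(1 - s)^2 * (c + d * s) * \<phi> s\<bar> = (1 - s)^2 * \<bar>c + d * s\<bar> * \<bar>\<phi> s\<bar>" by (simp add: abs_mult)
    also have "\<dots> \<le> (1 - s)^2 * \<bar>c + d * s\<bar> * D" using bd[OF s] by (simp add: mult_left_mono)
    also have "\<dots> = k * ((1 - s)^2 * ((1 - x) * \<bar>c + d * s\<bar>))" using xp by (simp add: k_def)
    also have "\<dots> \<le> g s" unfolding g_def using s chord_right[of x s c d] D0 xp
      by (intro mult_left_mono) (auto simp: k_def)
    finally show "norm ((1 - s)^2 * (c + d * s) * \<phi> s) \<le> g s" by simp
  qed
  moreover have "integral {x..1} g = D * ((1 - x)^3 * (3 * \<bar>c + d * x\<bar> + \<bar>c + d\<bar>) / 12)" using gi by (rule integral_unique)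
  ultimately show ?thesis by simp
qed


definition P2 :: "(real \<Rightarrow> real) \<Rightarrow> real \<Rightarrow> real" where
  "P2 \<phi> x = integral {0..x} (\<lambda>s. s^2 * \<phi> s)"
definition P3 :: "(real \<Rightarrow> real) \<Rightarrow> real \<Rightarrow> real" where
  "P3 \<phi> x = integral {0..x} (\<lambda>s. s^3 * \<phi> s)"
definition N0 :: "(real \<Rightarrow> real) \<Rightarrow> real \<Rightarrow> real" where
  "N0 \<phi> x = integral {0..1} (\<lambda>s. (1 - s)^2 * \<phi> s) - integral {0..x} (\<lambda>s. (1 - s)^2 * \<phi> s)"
definition N1 :: "(real \<Rightarrow> real) \<Rightarrow> real \<Rightarrow> real" where
  "N1 \<phi> x = integral {0..1} (\<lambda>s. s * (1 - s)^2 * \<phi> s) - integral {0..x} (\<lambda>s. s * (1 - s)^2 * \<phi> s)"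
definition KS :: "real \<Rightarrow> real \<Rightarrow> real \<Rightarrow> real \<Rightarrow> (real \<Rightarrow> real) \<Rightarrow> real \<Rightarrow> real" where
  "KS a b c d \<phi> x = a * P2 \<phi> x + b * P3 \<phi> x + c * N0 \<phi> x + d * N1 \<phi> x"
definition Tb :: "real \<Rightarrow> real \<Rightarrow> real \<Rightarrow> real \<Rightarrow> real \<Rightarrow> real" where
  "Tb a b c d x = x^3 * (\<bar>a\<bar> + 3 * \<bar>a + b * x\<bar>) / 12 + (1 - x)^3 * (3 * \<bar>c + d * x\<bar> + \<bar>c + d\<bar>) / 12"

lemma N_rewrite:
  fixes g :: "real \<Rightarrow> real"
  assumes "continuous_on {0..1} g" "0 \<le> x" "x \<le> 1"
  shows "integral {0..1} g - integral {0..x} g = integral {x..1} g"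
  using Henstock_Kurzweil_Integration.integral_combine[OF assms(2,3) integrable_continuous_interval[OF assms(1)]] by simp

lemma KS_bound:
  fixes \<phi> :: "real \<Rightarrow> real"
  assumes cont: "continuous_on {0..1} \<phi>" and bd: "\<And>s. s \<in> {0..1} \<Longrightarrow> \<bar>\<phi> s\<bar> \<le> D"
    and x: "0 \<le> x" "x \<le> 1"
  shows "\<bar>KS a b c d \<phi> x\<bar> \<le> D * Tb a b c d x"
proof -
  have c0x: "continuous_on {0..x} \<phi>" by (rule continuous_on_subset[OF cont]) (use x in auto)
  have c1x: "continuous_on {x..1} \<phi>" by (rule continuous_on_subset[OF cont]) (use x in auto)
  have i2: "(\<lambda>s. s^2 * \<phi> s) integrable_on {0..x}"
    by (intro integrable_continuous_interval continuous_intros c0x)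
  have i3: "(\<lambda>s. s^3 * \<phi> s) integrable_on {0..x}"
    by (intro integrable_continuous_interval continuous_intros c0x)
  have j0: "(\<lambda>s. (1 - s)^2 * \<phi> s) integrable_on {x..1}"
    by (intro integrable_continuous_interval continuous_intros c1x)
  have j1: "(\<lambda>s. s * (1 - s)^2 * \<phi> s) integrable_on {x..1}"
    by (intro integrable_continuous_interval continuous_intros c1x)
  have L: "a * P2 \<phi> x + b * P3 \<phi> x = integral {0..x} (\<lambda>s. s^2 * (a + b * s) * \<phi> s)"
  proof -
    have "integral {0..x} (\<lambda>s. s^2 * (a + b * s) * \<phi> s) = integral {0..x} (\<lambda>s. a * (s^2 * \<phi> s) + b * (s^3 * \<phi> s))"
      by (rule integral_cong) (simp add: algebra_simps power3_eq_cube power2_eq_square)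
    also have "\<dots> = a * P2 \<phi> x + b * P3 \<phi> x"
      using integral_add[OF integrable_on_mult_right[OF i2, of a] integrable_on_mult_right[OF i3, of b]]
      by (simp add: P2_def P3_def)
    finally show ?thesis by (rule sym)
  qed
  have R: "c * N0 \<phi> x + d * N1 \<phi> x = integral {x..1} (\<lambda>s. (1 - s)^2 * (c + d * s) * \<phi> s)"
  proof -
    have "integral {x..1} (\<lambda>s. (1 - s)^2 * (c + d * s) * \<phi> s) = integral {x..1} (\<lambda>s. c * ((1 - s)^2 * \<phi> s) + d * (s * (1 - s)^2 * \<phi> s))"
      by (rule integral_cong) (simp add: algebra_simps)
    also have "\<dots> = c * integral {x..1} (\<lambda>s. (1 - s)^2 * \<phi> s) + d * integral {x..1} (\<lambda>s. s * (1 - s)^2 * \<phi> s)"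
      using integral_add[OF integrable_on_mult_right[OF j0, of c] integrable_on_mult_right[OF j1, of d]]
      by simp
    also have "\<dots> = c * N0 \<phi> x + d * N1 \<phi> x"
      unfolding N0_def N1_def
      using N_rewrite[of "\<lambda>s. (1 - s)^2 * \<phi> s" x] N_rewrite[of "\<lambda>s. s * (1 - s)^2 * \<phi> s" x] x
      by (simp add: continuous_intros cont)
    finally show ?thesis by (rule sym)
  qed
  have eq: "KS a b c d \<phi> x = integral {0..x} (\<lambda>s. s^2 * (a + b * s) * \<phi> s) + integral {x..1} (\<lambda>s. (1 - s)^2 * (c + d * s) * \<phi> s)"
    unfolding KS_def using L R by simp
  have "\<bar>KS a b c d \<phi> x\<bar> \<le> \<bar>integral {0..x} (\<lambda>s. s^2 * (a + b * s) * \<phi> s)\<bar> + \<bar>integral {x..1} (\<lambda>s. (1 - s)^2 * (c + d * s) * \<phi> s)\<bar>"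
    unfolding eq by (rule abs_triangle_ineq)
  also have "\<dots> \<le> D * (x^3 * (\<bar>a\<bar> + 3 * \<bar>a + b * x\<bar>) / 12) + D * ((1 - x)^3 * (3 * \<bar>c + d * x\<bar> + \<bar>c + d\<bar>) / 12)"
    using left_bound[OF x(1) c0x, of D a b] right_bound[OF x(2) c1x, of D c d] bd x
    by (intro add_mono) auto
  also have "\<dots> = D * Tb a b c d x" by (simp add: Tb_def algebra_simps)
  finally show ?thesis .
qed


lemma intw_diff:
  fixes \<phi> \<gamma> w :: "real \<Rightarrow> real"
  assumes "continuous_on {0..1} \<phi>" "continuous_on {0..1} \<gamma>" "continuous_on {0..1} w" "0 \<le> y" "y \<le> 1"
  shows "integral {0..y} (\<lambda>s. w s * (\<phi> s - \<gamma> s)) = integral {0..y} (\<lambda>s. w s * \<phi> s) - integral {0..y} (\<lambda>s. w s * \<gamma> s)"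
proof -
  have sub: "{0..y} \<subseteq> {0..1}" using assms by auto
  have "(\<lambda>s. w s * \<phi> s) integrable_on {0..y}"
    by (intro integrable_continuous_interval continuous_on_mult continuous_on_subset[OF _ sub] assms)
  moreover have "(\<lambda>s. w s * \<gamma> s) integrable_on {0..y}"
    by (intro integrable_continuous_interval continuous_on_mult continuous_on_subset[OF _ sub] assms)
  ultimately show ?thesis by (simp add: right_diff_distrib integral_diff)
qed

lemma KS_diff:
  fixes \<phi> \<gamma> :: "real \<Rightarrow> real"
  assumes c1: "continuous_on {0..1} \<phi>" and c2: "continuous_on {0..1} \<gamma>" and x: "0 \<le> x" "x \<le> 1"
  shows "KS a b c d (\<lambda>s. \<phi> s - \<gamma> s) x = KS a b c d \<phi> x - KS a b c d \<gamma> x"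
proof -
  have w1: "continuous_on {0..1} (\<lambda>s::real. s^2)" "continuous_on {0..1} (\<lambda>s::real. s^3)"
    "continuous_on {0..1} (\<lambda>s::real. (1 - s)^2)" "continuous_on {0..1} (\<lambda>s::real. s * (1 - s)^2)"
    by (intro continuous_intros)+
  note I = intw_diff[OF c1 c2]
  have "P2 (\<lambda>s. \<phi> s - \<gamma> s) x = P2 \<phi> x - P2 \<gamma> x" unfolding P2_def using I[OF w1(1) x] by simp
  moreover have "P3 (\<lambda>s. \<phi> s - \<gamma> s) x = P3 \<phi> x - P3 \<gamma> x" unfolding P3_def using I[OF w1(2) x] by simp
  moreover have "N0 (\<lambda>s. \<phi> s - \<gamma> s) x = N0 \<phi> x - N0 \<gamma> x" unfolding N0_def using I[OF w1(3) x] I[OF w1(3), of 1] by simp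
  moreover have "N1 (\<lambda>s. \<phi> s - \<gamma> s) x = N1 \<phi> x - N1 \<gamma> x" unfolding N1_def using I[OF w1(4) x] I[OF w1(4), of 1] by simp
  ultimately show ?thesis unfolding KS_def by (simp only:) (simp add: algebra_simps)
qed

lemma intw_deriv:
  fixes \<phi> w :: "real \<Rightarrow> real"
  assumes "continuous_on {0..1} \<phi>" "continuous_on {0..1} w" "x \<in> {0..1}"
  shows "((\<lambda>y. integral {0..y} (\<lambda>s. w s * \<phi> s)) has_real_derivative w x * \<phi> x) (at x within {0..1})"
  using integral_has_real_derivative[of 0 1 "\<lambda>s. w s * \<phi> s" x] assms
  by (simp add: continuous_on_mult)

lemma PN_deriv:
  fixes \<phi> :: "real \<Rightarrow> real"
  assumes c: "continuous_on {0..1} \<phi>" and x: "x \<in> {0..1}"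
  shows "(P2 \<phi> has_real_derivative x^2 * \<phi> x) (at x within {0..1})"
    "(P3 \<phi> has_real_derivative x^3 * \<phi> x) (at x within {0..1})"
    "(N0 \<phi> has_real_derivative - ((1 - x)^2 * \<phi> x)) (at x within {0..1})"
    "(N1 \<phi> has_real_derivative - (x * (1 - x)^2 * \<phi> x)) (at x within {0..1})"
proof -
  have w1: "continuous_on {0..1} (\<lambda>s::real. s^2)" "continuous_on {0..1} (\<lambda>s::real. s^3)"
    "continuous_on {0..1} (\<lambda>s::real. (1 - s)^2)" "continuous_on {0..1} (\<lambda>s::real. s * (1 - s)^2)"
    by (intro continuous_intros)+
  have e: "P2 \<phi> = (\<lambda>y. integral {0..y} (\<lambda>s. s^2 * \<phi> s))" "P3 \<phi> = (\<lambda>y. integral {0..y} (\<lambda>s. s^3 * \<phi> s))"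
    "N0 \<phi> = (\<lambda>y. integral {0..1} (\<lambda>s. (1 - s)^2 * \<phi> s) - integral {0..y} (\<lambda>s. (1 - s)^2 * \<phi> s))"
    "N1 \<phi> = (\<lambda>y. integral {0..1} (\<lambda>s. s * (1 - s)^2 * \<phi> s) - integral {0..y} (\<lambda>s. s * (1 - s)^2 * \<phi> s))"
    by (auto simp: fun_eq_iff P2_def P3_def N0_def N1_def)
  show "(P2 \<phi> has_real_derivative x^2 * \<phi> x) (at x within {0..1})"
    unfolding e using intw_deriv[OF c w1(1) x] by simp
  show "(P3 \<phi> has_real_derivative x^3 * \<phi> x) (at x within {0..1})"
    unfolding e using intw_deriv[OF c w1(2) x] by simp
  show "(N0 \<phi> has_real_derivative - ((1 - x)^2 * \<phi> x)) (at x within {0..1})"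
    unfolding e using DERIV_diff[OF DERIV_const intw_deriv[OF c w1(3) x]] by simp
  show "(N1 \<phi> has_real_derivative - (x * (1 - x)^2 * \<phi> x)) (at x within {0..1})"
    unfolding e using DERIV_diff[OF DERIV_const intw_deriv[OF c w1(4) x]] by simp
qed

lemma KS_deriv:
  fixes \<phi> a b c d :: "real \<Rightarrow> real"
  assumes cont: "continuous_on {0..1} \<phi>" and x: "x \<in> {0..1}"
    and da: "(a has_real_derivative a') (at x within {0..1})"
    and db: "(b has_real_derivative b') (at x within {0..1})"
    and dc: "(c has_real_derivative c') (at x within {0..1})"
    and dd: "(d has_real_derivative d') (at x within {0..1})"
  shows "((\<lambda>y. KS (a y) (b y) (c y) (d y) \<phi> y) has_real_derivative
      KS a' b' c' d' \<phi> x + \<phi> x * (a x * x^2 + b x * x^3 - c x * (1 - x)^2 - d x * (x * (1 - x)^2)))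
      (at x within {0..1})"
proof -
  note D = PN_deriv[OF cont x]
  have "((\<lambda>y. a y * P2 \<phi> y + b y * P3 \<phi> y + c y * N0 \<phi> y + d y * N1 \<phi> y) has_real_derivative
     (a' * P2 \<phi> x + x^2 * \<phi> x * a x) + (b' * P3 \<phi> x + x^3 * \<phi> x * b x)
     + (c' * N0 \<phi> x + - ((1 - x)^2 * \<phi> x) * c x) + (d' * N1 \<phi> x + - (x * (1 - x)^2 * \<phi> x) * d x))
     (at x within {0..1})"
    by (intro DERIV_add DERIV_mult da db dc dd D)
  then show ?thesis unfolding KS_def
    by (rule DERIV_cong) (simp add: algebra_simps)
qed


definition S0 :: "(real \<Rightarrow> real) \<Rightarrow> real \<Rightarrow> real" where
  "S0 \<phi> x = KS (x * (1 - x)^2 / 2) (- (1 + 2 * x) * (1 - x)^2 / 6) (- (x^3) / 6) (x^2 * (3 - 2 * x) / 6) \<phi> x"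
definition S1 :: "(real \<Rightarrow> real) \<Rightarrow> real \<Rightarrow> real" where
  "S1 \<phi> x = KS ((1 - x) * (1 - 3 * x) / 2) (x * (1 - x)) (- (x^2) / 2) (x * (1 - x)) \<phi> x"
definition S2 :: "(real \<Rightarrow> real) \<Rightarrow> real \<Rightarrow> real" where
  "S2 \<phi> x = KS (3 * x - 2) (1 - 2 * x) (- x) (1 - 2 * x) \<phi> x"
definition S3 :: "(real \<Rightarrow> real) \<Rightarrow> real \<Rightarrow> real" where
  "S3 \<phi> x = KS 3 (-2) (-1) (-2) \<phi> x"

lemma S_deriv:
  fixes \<phi> :: "real \<Rightarrow> real"
  assumes cont: "continuous_on {0..1} \<phi>" and x: "x \<in> {0..1}"
  shows "(S0 \<phi> has_real_derivative S1 \<phi> x) (at x within {0..1})"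
    "(S1 \<phi> has_real_derivative S2 \<phi> x) (at x within {0..1})"
    "(S2 \<phi> has_real_derivative S3 \<phi> x) (at x within {0..1})"
    "(S3 \<phi> has_real_derivative \<phi> x) (at x within {0..1})"
proof -
  have e: "S0 \<phi> = (\<lambda>x. KS (x * (1 - x)^2 / 2) (- (1 + 2 * x) * (1 - x)^2 / 6) (- (x^3) / 6) (x^2 * (3 - 2 * x) / 6) \<phi> x)"
    "S1 \<phi> = (\<lambda>x. KS ((1 - x) * (1 - 3 * x) / 2) (x * (1 - x)) (- (x^2) / 2) (x * (1 - x)) \<phi> x)"
    "S2 \<phi> = (\<lambda>x. KS (3 * x - 2) (1 - 2 * x) (- x) (1 - 2 * x) \<phi> x)"
    "S3 \<phi> = (\<lambda>x. KS ((\<lambda>_. 3) x) ((\<lambda>_. -2) x) ((\<lambda>_. -1) x) ((\<lambda>_. -2) x) \<phi> x)"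
    by (auto simp: fun_eq_iff S0_def S1_def S2_def S3_def)
  have "(S0 \<phi> has_real_derivative KS ((1 - x) * (1 - 3 * x) / 2) (x * (1 - x)) (- (x^2) / 2) (x * (1 - x)) \<phi> x
     + \<phi> x * (x * (1 - x)^2 / 2 * x^2 + (- (1 + 2 * x) * (1 - x)^2 / 6) * x^3 - (- (x^3) / 6) * (1 - x)^2 - (x^2 * (3 - 2 * x) / 6) * (x * (1 - x)^2))) (at x within {0..1})"
    unfolding e(1)
    by (rule KS_deriv[OF cont x]; (rule derivative_eq_intros refl | simp)+; simp add: algebra_simps power2_eq_square power3_eq_cube)
  then show "(S0 \<phi> has_real_derivative S1 \<phi> x) (at x within {0..1})"
    by (rule DERIV_cong) (simp add: S1_def field_simps; algebra)
  have "(S1 \<phi> has_real_derivative KS (3 * x - 2) (1 - 2 * x) (- x) (1 - 2 * x) \<phi> x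
     + \<phi> x * ((1 - x) * (1 - 3 * x) / 2 * x^2 + (x * (1 - x)) * x^3 - (- (x^2) / 2) * (1 - x)^2 - (x * (1 - x)) * (x * (1 - x)^2))) (at x within {0..1})"
    unfolding e(2)
    by (rule KS_deriv[OF cont x]; (rule derivative_eq_intros refl | simp)+; simp add: algebra_simps power2_eq_square power3_eq_cube)
  then show "(S1 \<phi> has_real_derivative S2 \<phi> x) (at x within {0..1})"
    by (rule DERIV_cong) (simp add: S2_def field_simps; algebra)
  have "(S2 \<phi> has_real_derivative KS 3 (-2) (-1) (-2) \<phi> x
     + \<phi> x * ((3 * x - 2) * x^2 + (1 - 2 * x) * x^3 - (- x) * (1 - x)^2 - (1 - 2 * x) * (x * (1 - x)^2))) (at x within {0..1})"
    unfolding e(3)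
    by (rule KS_deriv[OF cont x]; (rule derivative_eq_intros refl | simp)+)
  then show "(S2 \<phi> has_real_derivative S3 \<phi> x) (at x within {0..1})"
    by (rule DERIV_cong) (simp add: S3_def field_simps; algebra)
  have "(S3 \<phi> has_real_derivative KS 0 0 0 0 \<phi> x
     + \<phi> x * (3 * x^2 + (-2) * x^3 - (-1) * (1 - x)^2 - (-2) * (x * (1 - x)^2))) (at x within {0..1})"
    unfolding e(4)
    by (rule KS_deriv[OF cont x]; rule DERIV_const)
  then show "(S3 \<phi> has_real_derivative \<phi> x) (at x within {0..1})"
    by (rule DERIV_cong) (simp add: KS_def algebra_simps power2_eq_square power3_eq_cube)
qed

lemma S_boundary:
  fixes \<phi> :: "real \<Rightarrow> real"
  shows "S0 \<phi> 0 = 0" "S0 \<phi> 1 = 0" "S1 \<phi> 0 = 0" "S1 \<phi> 1 = 0"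
  by (simp_all add: S0_def S1_def KS_def P2_def P3_def N0_def N1_def)


lemma T0_bound:
  fixes x :: real assumes x: "0 \<le> x" "x \<le> 1"
  shows "Tb (x * (1 - x)^2 / 2) (- (1 + 2 * x) * (1 - x)^2 / 6) (- (x^3) / 6) (x^2 * (3 - 2 * x) / 6) x \<le> 1 / 384"
proof -
  have e1: "x * (1 - x)^2 / 2 + (- (1 + 2 * x) * (1 - x)^2 / 6) * x = x * (1 - x)^3 / 3" by (simp add: field_simps power2_eq_square power3_eq_cube)
  have e2: "- (x^3) / 6 + (x^2 * (3 - 2 * x) / 6) * x = x^3 * (1 - x) / 3" by (simp add: field_simps power2_eq_square power3_eq_cube)
  have e3: "- (x^3) / 6 + (x^2 * (3 - 2 * x) / 6) = x^2 * (1 - x) / 2" by (simp add: field_simps power2_eq_square power3_eq_cube)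
  have n: "0 \<le> x * (1 - x)^2 / 2" "0 \<le> x * (1 - x)^3 / 3" "0 \<le> x^3 * (1 - x) / 3" "0 \<le> x^2 * (1 - x) / 2"
    using x by auto
  have "Tb (x * (1 - x)^2 / 2) (- (1 + 2 * x) * (1 - x)^2 / 6) (- (x^3) / 6) (x^2 * (3 - 2 * x) / 6) x
      = x^3 * (x * (1 - x)^2 / 2 + 3 * (x * (1 - x)^3 / 3)) / 12 + (1 - x)^3 * (3 * (x^3 * (1 - x) / 3) + x^2 * (1 - x) / 2) / 12"
    unfolding Tb_def e1 e2 e3 using n by simp
  also have "\<dots> = (x * (1 - x))^2 / 24" by (simp add: field_simps power2_eq_square power3_eq_cube)
  also have "\<dots> \<le> 1 / 384"
  proof -
    have "x * (1 - x) = 1/4 - (x - 1/2)^2" by (simp add: field_simps power2_eq_square power3_eq_cube)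
    hence "x * (1 - x) \<le> 1/4" by (simp add: zero_le_power2)
    moreover have "0 \<le> x * (1 - x)" using x by simp
    ultimately have "(x * (1 - x))^2 \<le> (1/4)^2" by (intro power_mono)
    thus ?thesis by (simp add: power_divide) linarith?
  qed
  finally show ?thesis .
qed


lemma pow5: "(t::real)^5 = t * t * t * t * t"
  by (simp add: eval_nat_numeral)

lemma sqrt_bound:
  fixes y :: real assumes y: "0 \<le> y" "y \<le> 1"
  shows "(y - y^3) / 48 \<le> 1 / (72 * sqrt 3)"
proof -
  define r where "r = sqrt 3"
  have r2: "r * r = 3" unfolding r_def by simp
  have rp: "r > 0" unfolding r_def by simp
  have "(y - r/3)^2 * (y + 2*r/3) = y^3 - y * (r * r) / 3 + 2 * r * (r * r) / 27"
    by (simp add: field_simps power2_eq_square power3_eq_cube)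
  also have "\<dots> = y^3 - y + 2 * r / 9" using r2 by simp
  finally have e: "(y - r/3)^2 * (y + 2*r/3) = y^3 - y + 2 * r / 9" .
  have "0 \<le> (y - r/3)^2 * (y + 2*r/3)" using y rp by simp
  hence "y - y^3 \<le> 2 * r / 9" using e by linarith
  hence "(y - y^3) / 48 \<le> r / 216" by simp
  also have "r / 216 = 1 / (72 * r)" using r2 rp by (simp add: field_simps)
  finally show ?thesis unfolding r_def .
qed

lemma P_bound:
  fixes x :: real assumes x: "1/3 \<le> x" "x \<le> 1/2"
  shows "2*x - 6*x^2 + 2*x^3 + 8*x^4 - 6*x^5 \<le> 24/125"
proof -
  define t where "t = 6 * x - 2"
  have xt: "x = (t + 2) / 6" unfolding t_def by simp
  have t: "0 \<le> t" "t \<le> 1" using x unfolding t_def by auto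
  have "2*x - 6*x^2 + 2*x^3 + 8*x^4 - 6*x^5 = 4/27 - 7*t/81 - 2*t^2/81 + t^3/36 - t^4/648 - t^5/1296"
    unfolding xt by (simp add: field_simps power2_eq_square power3_eq_cube power4_eq_xxxx pow5)
  moreover have "t^3 \<le> 1" using t by (simp add: power_le_one)
  moreover have "0 \<le> t^2" "0 \<le> t^4" "0 \<le> t^5" using t by auto
  ultimately show ?thesis using t by linarith
qed

lemma c125: "1 / 125 \<le> 1 / (72 * sqrt (3::real))"
proof -
  have "sqrt 3 \<le> 125 / (72::real)"
    by (rule power2_le_imp_le) (auto simp: power2_eq_square)
  thus ?thesis by (simp add: field_simps)
qed

lemma aux125: "(T::real) = P / 24 \<Longrightarrow> P \<le> 24 / 125 \<Longrightarrow> T \<le> 1 / 125"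
  by linarith

lemma T1_bound:
  fixes x :: real assumes x: "0 \<le> x" "x \<le> 1"
  shows "Tb ((1 - x) * (1 - 3 * x) / 2) (x * (1 - x)) (- (x^2) / 2) (x * (1 - x)) x \<le> 1 / (72 * sqrt 3)"
proof -
  have e1: "(1 - x) * (1 - 3 * x) / 2 + x * (1 - x) * x = (1 - x)^2 * (1 - 2 * x) / 2"
    by (simp add: field_simps power2_eq_square power3_eq_cube)
  have e2: "- (x^2) / 2 + x * (1 - x) * x = x^2 * (1 - 2 * x) / 2"
    by (simp add: field_simps power2_eq_square power3_eq_cube)
  have e3: "- (x^2) / 2 + x * (1 - x) = x * (2 - 3 * x) / 2"
    by (simp add: field_simps power2_eq_square power3_eq_cube)
  have T: "Tb ((1 - x) * (1 - 3 * x) / 2) (x * (1 - x)) (- (x^2) / 2) (x * (1 - x)) x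
    = x^3 * ((1 - x) * \<bar>1 - 3 * x\<bar> / 2 + 3 * ((1 - x)^2 * \<bar>1 - 2 * x\<bar> / 2)) / 12
      + (1 - x)^3 * (3 * (x^2 * \<bar>1 - 2 * x\<bar> / 2) + x * \<bar>2 - 3 * x\<bar> / 2) / 12"
    unfolding Tb_def e1 e2 e3 using x by (simp add: abs_mult)
  consider "x \<le> 1/3" | "1/3 \<le> x" "x \<le> 1/2" | "1/2 \<le> x" "x \<le> 2/3" | "2/3 \<le> x" by linarith
  then show ?thesis
  proof cases
    case 1
    hence "Tb ((1 - x) * (1 - 3 * x) / 2) (x * (1 - x)) (- (x^2) / 2) (x * (1 - x)) x
       = ((1 - 2 * x) - (1 - 2 * x)^3) / 48"
      unfolding T by (simp add: abs_of_nonneg field_simps power2_eq_square power3_eq_cube)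
    thus ?thesis using sqrt_bound[of "1 - 2 * x"] 1 x by simp
  next
    case 2
    hence "Tb ((1 - x) * (1 - 3 * x) / 2) (x * (1 - x)) (- (x^2) / 2) (x * (1 - x)) x
       = (2*x - 6*x^2 + 2*x^3 + 8*x^4 - 6*x^5) / 24"
      unfolding T by (simp add: abs_of_nonneg abs_of_nonpos field_simps power2_eq_square power3_eq_cube power4_eq_xxxx pow5)
    hence "Tb ((1 - x) * (1 - 3 * x) / 2) (x * (1 - x)) (- (x^2) / 2) (x * (1 - x)) x \<le> 1 / 125"
      using P_bound[OF 2] by (rule aux125)
    thus ?thesis using c125 by (rule order_trans)
  next
    case 3
    hence "Tb ((1 - x) * (1 - 3 * x) / 2) (x * (1 - x)) (- (x^2) / 2) (x * (1 - x)) x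
       = (2*(1-x) - 6*(1-x)^2 + 2*(1-x)^3 + 8*(1-x)^4 - 6*(1-x)^5) / 24"
      unfolding T by (simp add: abs_of_nonneg abs_of_nonpos field_simps power2_eq_square power3_eq_cube power4_eq_xxxx pow5)
    hence "Tb ((1 - x) * (1 - 3 * x) / 2) (x * (1 - x)) (- (x^2) / 2) (x * (1 - x)) x \<le> 1 / 125"
      using P_bound[of "1 - x"] 3 by (intro aux125) auto
    thus ?thesis using c125 by (rule order_trans)
  next
    case 4
    hence "Tb ((1 - x) * (1 - 3 * x) / 2) (x * (1 - x)) (- (x^2) / 2) (x * (1 - x)) x
       = ((2 * x - 1) - (2 * x - 1)^3) / 48"
      unfolding T by (simp add: abs_of_nonpos field_simps power2_eq_square power3_eq_cube)
    thus ?thesis using sqrt_bound[of "2 * x - 1"] 4 x by simp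
  qed
qed


lemma cube_le:
  fixes x :: real assumes "0 \<le> x" "x \<le> 1" shows "0 \<le> x^3" "x^3 \<le> x"
proof -
  show "0 \<le> x^3" using assms by simp
  have "x^3 = x * x^2" by (simp add: power2_eq_square power3_eq_cube)
  also have "\<dots> \<le> x * 1" using assms by (intro mult_left_mono) (auto simp: power_le_one)
  finally show "x^3 \<le> x" by simp
qed

lemma T2_bound:
  fixes x :: real assumes x: "0 \<le> x" "x \<le> 1"
  shows "Tb (3 * x - 2) (1 - 2 * x) (- x) (1 - 2 * x) x \<le> 1"
proof -
  have e1: "3 * x - 2 + (1 - 2 * x) * x = - 2 * (1 - x)^2" by (simp add: field_simps power2_eq_square)
  have e2: "- x + (1 - 2 * x) * x = - 2 * x^2" by (simp add: field_simps power2_eq_square)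
  have e3: "- x + (1 - 2 * x) = 1 - 3 * x" by simp
  have b1: "\<bar>3 * x - 2\<bar> + 3 * \<bar>- 2 * (1 - x)^2\<bar> \<le> 8"
  proof -
    have "(1 - x)^2 \<le> 1" using x by (intro power_le_one) auto
    thus ?thesis using x by (simp add: abs_mult abs_le_iff)
  qed
  have b2: "3 * \<bar>- 2 * x^2\<bar> + \<bar>1 - 3 * x\<bar> \<le> 8"
  proof -
    have "x^2 \<le> 1" using x by (intro power_le_one) auto
    thus ?thesis using x by (simp add: abs_mult abs_le_iff)
  qed
  have c1: "x^3 * (\<bar>3 * x - 2\<bar> + 3 * \<bar>- 2 * (1 - x)^2\<bar>) \<le> x^3 * 8"
    using b1 cube_le[OF x] by (intro mult_left_mono) auto
  have c2: "(1 - x)^3 * (3 * \<bar>- 2 * x^2\<bar> + \<bar>1 - 3 * x\<bar>) \<le> (1 - x)^3 * 8"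
    using b2 x by (intro mult_left_mono) auto
  have "x^3 \<le> x" "(1 - x)^3 \<le> 1 - x" using cube_le[OF x] cube_le[of "1 - x"] x by auto
  thus ?thesis unfolding Tb_def e1 e2 e3 using c1 c2 by linarith
qed

lemma T3_bound:
  fixes x :: real assumes x: "0 \<le> x" "x \<le> 1"
  shows "Tb 3 (-2) (-1) (-2) x \<le> 1"
proof -
  have c1: "x^3 * (\<bar>3\<bar> + 3 * \<bar>3 + -2 * x\<bar>) \<le> x^3 * 12"
    using x cube_le[OF x] by (intro mult_left_mono) auto
  have c2: "(1 - x)^3 * (3 * \<bar>-1 + -2 * x\<bar> + \<bar>-1 + -2\<bar>) \<le> (1 - x)^3 * 12"
    using x by (intro mult_left_mono) auto
  have "x^3 \<le> x" "(1 - x)^3 \<le> 1 - x" using cube_le[OF x] cube_le[of "1 - x"] x by auto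
  thus ?thesis unfolding Tb_def using c1 c2 by linarith
qed


lemma clamped_zero:
  fixes g g1 g2 g3 :: "real \<Rightarrow> real"
  assumes d: "\<And>x. x \<in> {0..1} \<Longrightarrow> (g has_real_derivative g1 x) (at x within {0..1}) \<and>
      (g1 has_real_derivative g2 x) (at x within {0..1}) \<and>
      (g2 has_real_derivative g3 x) (at x within {0..1}) \<and>
      (g3 has_real_derivative 0) (at x within {0..1})"
    and b: "g 0 = 0" "g 1 = 0" "g1 0 = 0" "g1 1 = 0"
  shows "\<And>x. x \<in> {0..1} \<Longrightarrow> g x = 0 \<and> g1 x = 0 \<and> g2 x = 0 \<and> g3 x = 0"
proof -
  have cv: "convex {0..1::real}" by (rule convex_real_interval)
  obtain c3 where c3: "\<And>x. x \<in> {0..1} \<Longrightarrow> g3 x = c3"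
    using has_field_derivative_zero_constant[OF cv, of g3] d by blast
  have "\<And>x. x \<in> {0..1} \<Longrightarrow> ((\<lambda>x. g2 x - c3 * x) has_real_derivative 0) (at x within {0..1})"
  proof -
    fix x :: real assume x: "x \<in> {0..1}"
    have "((\<lambda>x. g2 x - c3 * x) has_real_derivative g3 x - c3 * 1) (at x within {0..1})"
      using d[OF x] by (intro derivative_intros) auto
    thus "((\<lambda>x. g2 x - c3 * x) has_real_derivative 0) (at x within {0..1})" using c3[OF x] by simp
  qed
  then obtain c2 where c2: "\<And>x. x \<in> {0..1} \<Longrightarrow> g2 x - c3 * x = c2"
    using has_field_derivative_zero_constant[OF cv, of "\<lambda>x. g2 x - c3 * x"] by blast
  have "\<And>x. x \<in> {0..1} \<Longrightarrow> ((\<lambda>x. g1 x - (c3 * x^2 / 2 + c2 * x)) has_real_derivative 0) (at x within {0..1})"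
  proof -
    fix x :: real assume x: "x \<in> {0..1}"
    have "((\<lambda>x. g1 x - (c3 * x^2 / 2 + c2 * x)) has_real_derivative g2 x - (c3 * x + c2)) (at x within {0..1})"
      using d[OF x] by (auto intro!: derivative_eq_intros)
    thus "((\<lambda>x. g1 x - (c3 * x^2 / 2 + c2 * x)) has_real_derivative 0) (at x within {0..1})"
      by (rule DERIV_cong) (use c2[OF x] in linarith)
  qed
  then obtain c1 where c1: "\<And>x. x \<in> {0..1} \<Longrightarrow> g1 x - (c3 * x^2 / 2 + c2 * x) = c1"
    using has_field_derivative_zero_constant[OF cv, of "\<lambda>x. g1 x - (c3 * x^2 / 2 + c2 * x)"] by blast
  have "\<And>x. x \<in> {0..1} \<Longrightarrow> ((\<lambda>x. g x - (c3 * x^3 / 6 + c2 * x^2 / 2 + c1 * x)) has_real_derivative 0) (at x within {0..1})"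
  proof -
    fix x :: real assume x: "x \<in> {0..1}"
    have "((\<lambda>x. g x - (c3 * x^3 / 6 + c2 * x^2 / 2 + c1 * x)) has_real_derivative g1 x - (c3 * x^2 / 2 + c2 * x + c1)) (at x within {0..1})"
      using d[OF x] by (auto intro!: derivative_eq_intros simp: power2_eq_square)
    thus "((\<lambda>x. g x - (c3 * x^3 / 6 + c2 * x^2 / 2 + c1 * x)) has_real_derivative 0) (at x within {0..1})"
      by (rule DERIV_cong) (use c1[OF x] in linarith)
  qed
  then obtain c0 where c0: "\<And>x. x \<in> {0..1} \<Longrightarrow> g x - (c3 * x^3 / 6 + c2 * x^2 / 2 + c1 * x) = c0"
    using has_field_derivative_zero_constant[OF cv, of "\<lambda>x. g x - (c3 * x^3 / 6 + c2 * x^2 / 2 + c1 * x)"] by blast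
  have "c0 = 0" using c0[of 0] b by simp
  moreover have "c1 = 0" using c1[of 0] b by simp
  moreover have "c3 / 6 + c2 / 2 + c1 + c0 = 0" using c0[of 1] b by simp
  moreover have "c3 / 2 + c2 + c1 = 0" using c1[of 1] b by simp
  ultimately have z: "c0 = 0" "c1 = 0" "c2 = 0" "c3 = 0" by linarith+
  fix x :: real assume x: "x \<in> {0..1}"
  show "g x = 0 \<and> g1 x = 0 \<and> g2 x = 0 \<and> g3 x = 0"
    using c0[OF x] c1[OF x] c2[OF x] c3[OF x] z by simp
qed

lemma S_bounds:
  fixes \<phi> :: "real \<Rightarrow> real"
  assumes cont: "continuous_on {0..1} \<phi>" and bd: "\<And>s. s \<in> {0..1} \<Longrightarrow> \<bar>\<phi> s\<bar> \<le> D"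
    and x: "0 \<le> x" "x \<le> 1"
  shows "\<bar>S0 \<phi> x\<bar> \<le> D / 384" "\<bar>S1 \<phi> x\<bar> \<le> D / (72 * sqrt 3)" "\<bar>S2 \<phi> x\<bar> \<le> D" "\<bar>S3 \<phi> x\<bar> \<le> D"
proof -
  have D0: "0 \<le> D" using bd[of 0] by force
  show "\<bar>S0 \<phi> x\<bar> \<le> D / 384"
    using order_trans[OF KS_bound[OF cont bd x] mult_left_mono[OF T0_bound[OF x] D0]] unfolding S0_def by simp
  show "\<bar>S1 \<phi> x\<bar> \<le> D / (72 * sqrt 3)"
    using order_trans[OF KS_bound[OF cont bd x] mult_left_mono[OF T1_bound[OF x] D0]] unfolding S1_def by simp
  show "\<bar>S2 \<phi> x\<bar> \<le> D"
    using order_trans[OF KS_bound[OF cont bd x] mult_left_mono[OF T2_bound[OF x] D0]] unfolding S2_def by simp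
  show "\<bar>S3 \<phi> x\<bar> \<le> D"
    using order_trans[OF KS_bound[OF cont bd x] mult_left_mono[OF T3_bound[OF x] D0]] unfolding S3_def by simp
qed

lemma S_diff:
  fixes \<phi> \<gamma> :: "real \<Rightarrow> real"
  assumes "continuous_on {0..1} \<phi>" "continuous_on {0..1} \<gamma>" "0 \<le> x" "x \<le> 1"
  shows "S0 (\<lambda>s. \<phi> s - \<gamma> s) x = S0 \<phi> x - S0 \<gamma> x" "S1 (\<lambda>s. \<phi> s - \<gamma> s) x = S1 \<phi> x - S1 \<gamma> x"
    "S2 (\<lambda>s. \<phi> s - \<gamma> s) x = S2 \<phi> x - S2 \<gamma> x" "S3 (\<lambda>s. \<phi> s - \<gamma> s) x = S3 \<phi> x - S3 \<gamma> x"
  unfolding S0_def S1_def S2_def S3_def using KS_diff[OF assms] by simp_all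

lemma S_cont:
  fixes \<phi> :: "real \<Rightarrow> real"
  assumes "continuous_on {0..1} \<phi>"
  shows "continuous_on {0..1} (S0 \<phi>)" "continuous_on {0..1} (S1 \<phi>)" "continuous_on {0..1} (S2 \<phi>)" "continuous_on {0..1} (S3 \<phi>)"
  by (rule DERIV_continuous_on, erule S_deriv[OF assms])+

theorem theorem1:
  fixes f :: "real \<Rightarrow> real \<Rightarrow> real \<Rightarrow> real \<Rightarrow> real \<Rightarrow> real"
    and M K1 K2 K3 K4 :: real
  assumes cont: "continuous_on ({0..1} \<times> UNIV) (\<lambda>(x, u, y, v, z). f x u y v z)"
    and M_pos: "M > 0"
    and bound: "\<And>x u y v z. in_DM M x u y v z \<Longrightarrow> \<bar>f x u y v z\<bar> \<le> M / 2"
    and K_nonneg: "K1 \<ge> 0" "K2 \<ge> 0" "K3 \<ge> 0" "K4 \<ge> 0"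
    and lip: "\<And>x u1 y1 v1 z1 u2 y2 v2 z2.
       in_DM M x u1 y1 v1 z1 \<Longrightarrow> in_DM M x u2 y2 v2 z2 \<Longrightarrow>
       \<bar>f x u2 y2 v2 z2 - f x u1 y1 v1 z1\<bar>
         \<le> K1 * \<bar>u2 - u1\<bar> + K2 * \<bar>y2 - y1\<bar> + K3 * \<bar>v2 - v1\<bar> + K4 * \<bar>z2 - z1\<bar>"
    and q: "K1 / 384 + K2 / (72 * sqrt 3) + K3 + K4 < 1 / 2"
  shows "\<exists>u u1 u2 u3. is_solution f u u1 u2 u3 \<and> sol_bounds M u u1 u2 u3 \<and>
           (\<forall>w w1 w2 w3. is_solution f w w1 w2 w3 \<and> sol_bounds M w w1 w2 w3
              \<longrightarrow> (\<forall>x\<in>{0..1}. w x = u x))"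
proof -
  define q where "q = K1 / 384 + K2 / (72 * sqrt 3) + K3 + K4"
  have s3: "0 < sqrt (3::real)" by simp
  have q0: "0 \<le> q" unfolding q_def using K_nonneg s3 by (simp add: divide_nonneg_pos)
  have q1: "q < 1" using q unfolding q_def by linarith
  define cF where "cF \<phi> x = f x (S0 \<phi> x) (S1 \<phi> x) (S2 \<phi> x) (S3 \<phi> x)" for \<phi> x
  have inD: "in_DM M x (S0 \<phi> x) (S1 \<phi> x) (S2 \<phi> x) (S3 \<phi> x)"
    if c: "continuous_on {0..1} \<phi>" and b: "\<And>s. s \<in> {0..1} \<Longrightarrow> \<bar>\<phi> s\<bar> \<le> M" and x: "x \<in> {0..1}" for \<phi> x
    using S_bounds[OF c b, of x] x unfolding in_DM_def by auto
  have cFb: "\<bar>cF \<phi> x\<bar> \<le> M / 2"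
    if c: "continuous_on {0..1} \<phi>" and b: "\<And>s. s \<in> {0..1} \<Longrightarrow> \<bar>\<phi> s\<bar> \<le> M" and x: "x \<in> {0..1}" for \<phi> x
    unfolding cF_def by (rule bound[OF inD[OF c b x]])
  have lipF: "\<bar>cF \<phi> x - cF \<gamma> x\<bar> \<le> q * D"
    if c1: "continuous_on {0..1} \<phi>" and b1: "\<And>s. s \<in> {0..1} \<Longrightarrow> \<bar>\<phi> s\<bar> \<le> M"
    and c2: "continuous_on {0..1} \<gamma>" and b2: "\<And>s. s \<in> {0..1} \<Longrightarrow> \<bar>\<gamma> s\<bar> \<le> M"
    and bD: "\<And>s. s \<in> {0..1} \<Longrightarrow> \<bar>\<phi> s - \<gamma> s\<bar> \<le> D" and x: "x \<in> {0..1}" for \<phi> \<gamma> D x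
  proof -
    have cd: "continuous_on {0..1} (\<lambda>s. \<phi> s - \<gamma> s)" using c1 c2 by (intro continuous_intros)
    have x': "0 \<le> x" "x \<le> 1" using x by auto
    note Sd = S_diff[OF c1 c2 x']
    note Sb = S_bounds[OF cd bD x']
    have "\<bar>cF \<phi> x - cF \<gamma> x\<bar> \<le> K1 * \<bar>S0 \<phi> x - S0 \<gamma> x\<bar> + K2 * \<bar>S1 \<phi> x - S1 \<gamma> x\<bar> + K3 * \<bar>S2 \<phi> x - S2 \<gamma> x\<bar> + K4 * \<bar>S3 \<phi> x - S3 \<gamma> x\<bar>"
      unfolding cF_def by (rule lip[OF inD[OF c2 b2 x] inD[OF c1 b1 x]])
    also have "\<dots> \<le> K1 * (D / 384) + K2 * (D / (72 * sqrt 3)) + K3 * D + K4 * D"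
      using Sb unfolding Sd using K_nonneg
      by (intro add_mono mult_left_mono) auto
    also have "\<dots> = q * D" unfolding q_def by (simp add: algebra_simps)
    finally show ?thesis .
  qed
  have contF: "continuous_on {0..1} (cF \<phi>)" if c: "continuous_on {0..1} \<phi>" for \<phi>
  proof -
    have "continuous_on {0..1} (\<lambda>x. (\<lambda>(x, u, y, v, z). f x u y v z) (x, S0 \<phi> x, S1 \<phi> x, S2 \<phi> x, S3 \<phi> x))"
      by (rule continuous_on_compose2[OF cont]) (auto intro!: continuous_intros S_cont[OF c])
    thus ?thesis unfolding cF_def by simp
  qed
  define cl where "cl x = max 0 (min 1 x)" for x :: real
  define clip where "clip v = max (- M) (min M v)" for v :: real
  have clipM: "\<bar>clip v\<bar> \<le> M" for v using M_pos unfolding clip_def by auto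
  have clipL: "\<bar>clip v - clip w\<bar> \<le> \<bar>v - w\<bar>" for v w unfolding clip_def by auto
  have clipC: "continuous_on A (\<lambda>s. clip (apply_bcontfun g s))" for A g
    unfolding clip_def by (intro continuous_intros) auto
  have clC: "continuous_on UNIV cl" unfolding cl_def by (intro continuous_intros)
  have clR: "cl ` UNIV \<subseteq> {0..1}" unfolding cl_def by auto
  have clI: "x \<in> {0..1} \<Longrightarrow> cl x = x" for x unfolding cl_def by auto
  define Op where "Op g = Bcontfun (\<lambda>x. cF (\<lambda>s. clip (apply_bcontfun g s)) (cl x))" for g :: "real \<Rightarrow>\<^sub>C real"
  have inb: "(\<lambda>x. cF (\<lambda>s. clip (apply_bcontfun g s)) (cl x)) \<in> bcontfun" for g
  proof (rule bcontfun_normI)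
    show "continuous_on UNIV (\<lambda>x. cF (\<lambda>s. clip (apply_bcontfun g s)) (cl x))"
      by (rule continuous_on_compose2[OF contF[OF clipC] clC clR])
    fix x
    show "norm (cF (\<lambda>s. clip (apply_bcontfun g s)) (cl x)) \<le> M / 2"
    proof -
      have "cl x \<in> {0..1}" using clR by blast
      thus ?thesis using cFb[OF clipC clipM, of "cl x" g] by simp
    qed
  qed
  have app: "apply_bcontfun (Op g) = (\<lambda>x. cF (\<lambda>s. clip (apply_bcontfun g s)) (cl x))" for g
    unfolding Op_def by (rule Bcontfun_inverse[OF inb])
  have contr: "dist (Op g) (Op h) \<le> q * dist g h" for g h
  proof (rule dist_bound)
    fix x
    have "\<bar>cF (\<lambda>s. clip (apply_bcontfun g s)) (cl x) - cF (\<lambda>s. clip (apply_bcontfun h s)) (cl x)\<bar> \<le> q * dist g h"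
    proof (rule lipF[OF clipC clipM clipC clipM])
      fix s
      have "\<bar>clip (apply_bcontfun g s) - clip (apply_bcontfun h s)\<bar> \<le> \<bar>apply_bcontfun g s - apply_bcontfun h s\<bar>"
        by (rule clipL)
      also have "\<dots> \<le> dist g h" using dist_bounded[of g s h] by (simp add: dist_real_def)
      finally show "\<bar>clip (apply_bcontfun g s) - clip (apply_bcontfun h s)\<bar> \<le> dist g h" .
    next
      show "cl x \<in> {0..1}" using clR by blast
    qed
    thus "dist (apply_bcontfun (Op g) x) (apply_bcontfun (Op h) x) \<le> q * dist g h"
      by (simp add: app dist_real_def)
  qed
  obtain g0 where g0: "Op g0 = g0" using banach_fix_type[OF q0 q1, of Op] contr by blast
  define \<phi> where "\<phi> s = clip (apply_bcontfun g0 s)" for s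
  have phiC: "continuous_on {0..1} \<phi>" unfolding \<phi>_def[abs_def] by (rule clipC)
  have phiM: "\<bar>\<phi> s\<bar> \<le> M" for s unfolding \<phi>_def by (rule clipM)
  have phiF: "\<phi> x = cF \<phi> x" if x: "x \<in> {0..1}" for x
  proof -
    have "apply_bcontfun g0 x = cF \<phi> x"
      using arg_cong[OF g0, of "\<lambda>g. apply_bcontfun g x"] clI[OF x] unfolding app \<phi>_def[abs_def] by simp
    moreover have "\<bar>cF \<phi> x\<bar> \<le> M / 2" by (rule cFb[OF phiC phiM x])
    ultimately show ?thesis using M_pos unfolding \<phi>_def clip_def by auto
  qed
  show ?thesis
  proof (intro exI conjI allI impI ballI)
    have A: "\<forall>x\<in>{0..1}. (S0 \<phi> has_real_derivative S1 \<phi> x) (at x within {0..1}) \<and>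
          (S1 \<phi> has_real_derivative S2 \<phi> x) (at x within {0..1}) \<and>
          (S2 \<phi> has_real_derivative S3 \<phi> x) (at x within {0..1}) \<and>
          (S3 \<phi> has_real_derivative \<phi> x) (at x within {0..1})"
      using S_deriv[OF phiC] by blast
    have B: "\<forall>x\<in>{0<..<1}. \<phi> x = f x (S0 \<phi> x) (S1 \<phi> x) (S2 \<phi> x) (S3 \<phi> x)"
      using phiF unfolding cF_def by auto
    show "is_solution f (S0 \<phi>) (S1 \<phi>) (S2 \<phi>) (S3 \<phi>)"
      unfolding is_solution_def using A B phiC S_boundary by blast
  next
    show "sol_bounds M (S0 \<phi>) (S1 \<phi>) (S2 \<phi>) (S3 \<phi>)"
      unfolding sol_bounds_def using inD[OF phiC phiM] unfolding in_DM_def by blast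
  next
    fix w w1 w2 w3 and x :: real
    assume W: "is_solution f w w1 w2 w3 \<and> sol_bounds M w w1 w2 w3" and x: "x \<in> {0..1}"
    then obtain \<psi> where dW: "\<And>x. x \<in> {0..1} \<Longrightarrow> (w has_real_derivative w1 x) (at x within {0..1}) \<and>
              (w1 has_real_derivative w2 x) (at x within {0..1}) \<and>
              (w2 has_real_derivative w3 x) (at x within {0..1}) \<and>
              (w3 has_real_derivative \<psi> x) (at x within {0..1})"
      and psiC: "continuous_on {0..1} \<psi>"
      and ode: "\<And>x. x \<in> {0<..<1} \<Longrightarrow> \<psi> x = f x (w x) (w1 x) (w2 x) (w3 x)"
      and bW: "w 0 = 0" "w 1 = 0" "w1 0 = 0" "w1 1 = 0"
      unfolding is_solution_def by blast
    have sbW: "\<And>x. x \<in> {0..1} \<Longrightarrow> in_DM M x (w x) (w1 x) (w2 x) (w3 x)"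
      using W unfolding sol_bounds_def in_DM_def by auto
    have eqW: "w y - S0 \<psi> y = 0 \<and> w1 y - S1 \<psi> y = 0 \<and> w2 y - S2 \<psi> y = 0 \<and> w3 y - S3 \<psi> y = 0"
      if y: "y \<in> {0..1}" for y
    proof (rule clamped_zero[of "\<lambda>y. w y - S0 \<psi> y" "\<lambda>y. w1 y - S1 \<psi> y"
          "\<lambda>y. w2 y - S2 \<psi> y" "\<lambda>y. w3 y - S3 \<psi> y", OF _ _ _ _ _ y])
      fix z :: real assume z: "z \<in> {0..1}"
      note dd = dW[OF z] S_deriv[OF psiC z]
      show "((\<lambda>y. w y - S0 \<psi> y) has_real_derivative w1 z - S1 \<psi> z) (at z within {0..1}) \<and>
          ((\<lambda>y. w1 y - S1 \<psi> y) has_real_derivative w2 z - S2 \<psi> z) (at z within {0..1}) \<and>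
          ((\<lambda>y. w2 y - S2 \<psi> y) has_real_derivative w3 z - S3 \<psi> z) (at z within {0..1}) \<and>
          ((\<lambda>y. w3 y - S3 \<psi> y) has_real_derivative 0) (at z within {0..1})"
        using dd by (auto intro!: DERIV_diff[THEN DERIV_cong])
    qed (simp_all add: bW S_boundary)
    have psiF: "\<psi> y = cF \<psi> y" if y: "y \<in> {0..1}" for y
    proof -
      have "\<bar>\<psi> y - cF \<psi> y\<bar> \<le> 0"
      proof (rule continuous_le_on_closure[of "{0<..<1}" "\<lambda>y. \<bar>\<psi> y - cF \<psi> y\<bar>"])
        show "continuous_on (closure {0<..<1}) (\<lambda>y. \<bar>\<psi> y - cF \<psi> y\<bar>)"
          using psiC contF[OF psiC] by (auto intro!: continuous_intros)
        show "y \<in> closure {0<..<1::real}" using y by simp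
        fix z :: real assume z: "z \<in> {0<..<1}"
        hence z': "z \<in> {0..1}" by auto
        show "\<bar>\<psi> z - cF \<psi> z\<bar> \<le> 0" using ode[OF z] eqW[OF z'] unfolding cF_def by simp
      qed
      thus ?thesis by simp
    qed
    have psiM: "\<bar>\<psi> s\<bar> \<le> M" if s: "s \<in> {0..1}" for s
    proof -
      have "\<psi> s = f s (w s) (w1 s) (w2 s) (w3 s)" using psiF[OF s] eqW[OF s] unfolding cF_def by simp
      hence "\<bar>\<psi> s\<bar> \<le> M / 2" using bound[OF sbW[OF s]] by simp
      thus ?thesis using M_pos by simp
    qed
    obtain x0 where x0: "x0 \<in> {0..1}" and mx: "\<And>y. y \<in> {0..1} \<Longrightarrow> \<bar>\<psi> y - \<phi> y\<bar> \<le> \<bar>\<psi> x0 - \<phi> x0\<bar>"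
    proof -
      have "continuous_on {0..1} (\<lambda>y. \<bar>\<psi> y - \<phi> y\<bar>)" using psiC phiC by (intro continuous_intros)
      then have "\<exists>x\<in>{0..1}. \<forall>y\<in>{0..1}. \<bar>\<psi> y - \<phi> y\<bar> \<le> \<bar>\<psi> x - \<phi> x\<bar>"
        by (intro continuous_attains_sup) auto
      thus ?thesis using that by blast
    qed
    define D where "D = \<bar>\<psi> x0 - \<phi> x0\<bar>"
    have "D = \<bar>cF \<psi> x0 - cF \<phi> x0\<bar>" unfolding D_def using psiF[OF x0] phiF[OF x0] by simp
    also have "\<dots> \<le> q * D"
      by (rule lipF[OF psiC psiM phiC phiM]) (use mx x0 D_def in auto)
    finally have "D \<le> q * D" .
    moreover have "0 \<le> D" unfolding D_def by simp
    ultimately have D0: "D = 0"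
    proof -
      assume a: "D \<le> q * D" "0 \<le> D"
      show "D = 0"
      proof (rule ccontr)
        assume "D \<noteq> 0"
        hence "0 < D" using a by simp
        hence "q * D < 1 * D" by (rule mult_strict_right_mono[OF q1])
        thus False using a by simp
      qed
    qed
    have cd: "continuous_on {0..1} (\<lambda>s. \<psi> s - \<phi> s)" using psiC phiC by (intro continuous_intros)
    have x': "0 \<le> x" "x \<le> 1" using x by auto
    have "\<bar>S0 (\<lambda>s. \<psi> s - \<phi> s) x\<bar> \<le> 0 / 384"
      by (rule S_bounds(1)[OF cd _ x']) (use mx D0 D_def in auto)
    hence "S0 \<psi> x = S0 \<phi> x" using S_diff(1)[OF psiC phiC x'] by simp
    thus "w x = S0 \<phi> x" using eqW[OF x] by simp
  qed
qed

end
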